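(* For every protocol $\Pi$ for the game $G_n$ there exists an order oblivious protocol $\Pi'$ for $G_n$ such that $E(\Pi')\subseteq E(\Pi)$. In particular (with Bob using his optimal output rule in $\Pi'$), $c(\Pi')\le c(\Pi)$.
   Context: The game $G_n$ ($n$ a positive integer): Alice receives, as a stream, a permutation $\sigma=(\sigma_1,\dots,\sigma_n)$ of $[n]=\{1,\dots,n\}$ followed by a bit $b\in\{0,1\}$. She has an array $\mathbf{v}=(v_1,\dots,v_n)$ whose cells are initially empty (denoted $*$). For each $i<n$, upon receiving $\sigma_i$ she writes a bit in cell $\sigma_i$; this bit may depend on everything she has received so far ($\sigma_1,\dots,\sigma_i$), and once written cannot be changed. Upon receiving $\sigma_n$ and $b$ she writes $b$ in cell $\sigma_n$. Bob receives the completed array $\mathbf{v}\in\{0,1\}^n$ and outputs a set $J\subseteq[n]$ as a function of $\mathbf{v}$. A protocol (Alice's writing rule together with Bob's output map) is valid if $\sigma_n\in J$ for all $\sigma,b$; its cost $c(\Pi)$ is the maximum of $|J|$ over all $\sigma,b$. All protocols are assumed valid. For a protocol $\Pi$ and permutation $\sigma$, $\Pi_A(\sigma)\in\{0,1,*\}^n$ denotes the array after Alice has processed $\sigma_1,\dots,\sigma_{n-1}$ (so only cell $\sigma_n$ is $*$); it is identified with the edge of the Hamming cube $\{0,1\}^n$ joining its two completions. $E(\Pi)$ is the set of edges $\Pi_A(\sigma)$ over all permutations $\sigma$. A protocol is order oblivious if the bit Alice writes in cell $\sigma_i$ depends only on $\sigma_i$ and on the current partial assignment of $\mathbf{v}$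 (which cells are filled and with which bits), and not on the order in which $\sigma_1,\dots,\sigma_{i-1}$ arrived. *)

theory Defs
  imports Main
begin

text \<open>Cells are indexed by 0..<n (standing for [n]). Alice's rule is a function of the
  prefix received so far (ending with the cell currently being written); Bob's rule maps
  the completed array (a partial map with domain {0..<n}) to a set J.\<close>

definition perms :: "nat \<Rightarrow> nat list set" where
  "perms n = {\<sigma>. distinct \<sigma> \<and> set \<sigma> = {0..<n}}"

type_synonym alice = "nat list \<Rightarrow> bool"
type_synonym arr = "nat \<Rightarrow> bool option"
type_synonym bob = "arr \<Rightarrow> nat set"

fun fill :: "alice \<Rightarrow> nat list \<Rightarrow> nat list \<Rightarrow> arr" where
  "fill A pre [] = Map.empty"
| "fill A pre (x # xs) = (fill A (pre @ [x]) xs)(x \<mapsto> A (pre @ [x]))"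

definition partial :: "alice \<Rightarrow> nat list \<Rightarrow> arr" where
  "partial A xs = fill A [] xs"

text \<open>Pi_A(sigma): array after sigma_1..sigma_{n-1}, cell sigma_n empty (an edge).\<close>
definition PiA :: "alice \<Rightarrow> nat list \<Rightarrow> arr" where
  "PiA A \<sigma> = partial A (butlast \<sigma>)"

definition completed :: "alice \<Rightarrow> nat list \<Rightarrow> bool \<Rightarrow> arr" where
  "completed A \<sigma> b = (PiA A \<sigma>)(last \<sigma> \<mapsto> b)"

definition valid_protocol :: "nat \<Rightarrow> alice \<Rightarrow> bob \<Rightarrow> bool" where
  "valid_protocol n A B \<longleftrightarrow>
     (\<forall>\<sigma>\<in>perms n. \<forall>b. B (completed A \<sigma> b) \<subseteq> {0..<n} \<and> last \<sigma> \<in> B (completed A \<sigma> b))"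

definition cost :: "nat \<Rightarrow> alice \<Rightarrow> bob \<Rightarrow> nat" where
  "cost n A B = Max {card (B (completed A \<sigma> b)) | \<sigma> b. \<sigma> \<in> perms n}"

definition edges :: "nat \<Rightarrow> alice \<Rightarrow> arr set" where
  "edges n A = {PiA A \<sigma> | \<sigma>. \<sigma> \<in> perms n}"

definition order_oblivious :: "nat \<Rightarrow> alice \<Rightarrow> bool" where
  "order_oblivious n A \<longleftrightarrow>
     (\<exists>g :: arr \<Rightarrow> nat \<Rightarrow> bool. \<forall>xs x.
        distinct (xs @ [x]) \<and> set (xs @ [x]) \<subseteq> {0..<n} \<and> length (xs @ [x]) < n
        \<longrightarrow> A (xs @ [x]) = g (partial A xs) x)"

end

theory Submission
  imports Defs
begin

lemma fill_snoc:
  "x \<notin> set \<tau> \<Longrightarrow> fill A pre (\<tau> @ [x]) = (fill A pre \<tau>)(x \<mapsto> A (pre @ \<tau> @ [x]))"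
proof (induction \<tau> arbitrary: pre)
  case Nil then show ?case by simp
next
  case (Cons y \<tau>)
  then have "x \<noteq> y" by auto
  with Cons show ?case by (auto simp add: fun_eq_iff)
qed

lemma partial_snoc:
  "x \<notin> set \<tau> \<Longrightarrow> partial A (\<tau> @ [x]) = (partial A \<tau>)(x \<mapsto> A (\<tau> @ [x]))"
  unfolding partial_def by (simp add: fill_snoc)

lemma dom_fill: "dom (fill A pre \<tau>) = set \<tau>"
  by (induction \<tau> arbitrary: pre) auto

definition canon :: "alice \<Rightarrow> arr \<Rightarrow> nat list" where
  "canon A p = (SOME \<tau>. distinct \<tau> \<and> partial A \<tau> = p)"

fun tr :: "alice \<Rightarrow> nat list \<Rightarrow> nat list" where
  "tr A [] = []"
| "tr A (x # ys) = canon A (partial A (tr A ys)) @ [x]"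

definition obl :: "alice \<Rightarrow> alice" where
  "obl A l = A (tr A (rev l))"

lemma canon_ok:
  assumes "distinct \<tau>"
  shows "distinct (canon A (partial A \<tau>)) \<and> partial A (canon A (partial A \<tau>)) = partial A \<tau>"
  unfolding canon_def by (rule someI[where x=\<tau>]) (use assms in auto)

lemma inv:
  "distinct xs \<Longrightarrow> distinct (tr A (rev xs)) \<and> set (tr A (rev xs)) = set xs
     \<and> partial (obl A) xs = partial A (tr A (rev xs))"
proof (induction xs rule: rev_induct)
  case Nil then show ?case by (simp add: partial_def)
next
  case (snoc x xs)
  let ?t = "tr A (rev xs)"
  let ?c = "canon A (partial A ?t)"
  from snoc have IH: "distinct ?t" "set ?t = set xs" "partial (obl A) xs = partial A ?t"
    and xn: "x \<notin> set xs" by auto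
  from canon_ok[OF IH(1)] have c: "distinct ?c" "partial A ?c = partial A ?t" by auto
  have "set ?c = set ?t"
    using c(2) dom_fill[of A "[]" ?c] dom_fill[of A "[]" ?t] unfolding partial_def by simp
  with IH have sc: "set ?c = set xs" by simp
  have tr: "tr A (rev (xs @ [x])) = ?c @ [x]" by simp
  have "partial (obl A) (xs @ [x]) = (partial (obl A) xs)(x \<mapsto> obl A (xs @ [x]))"
    using partial_snoc[OF xn] by simp
  also have "\<dots> = (partial A ?c)(x \<mapsto> A (?c @ [x]))"
    using IH(3) c(2) by (simp add: obl_def)
  also have "\<dots> = partial A (?c @ [x])"
    using partial_snoc[of x ?c A] sc xn by simp
  finally show ?case using tr c(1) sc xn by simp
qed

lemma oblivious: "order_oblivious n (obl A)"
  unfolding order_oblivious_def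
proof (intro exI[where x="\<lambda>p x. A (canon A p @ [x])"] allI impI)
  fix xs x assume h: "distinct (xs @ [x]) \<and> set (xs @ [x]) \<subseteq> {0..<n} \<and> length (xs @ [x]) < n"
  then have "partial (obl A) xs = partial A (tr A (rev xs))" using inv[of xs A] by auto
  then show "obl A (xs @ [x]) = A (canon A (partial (obl A) xs) @ [x])"
    by (simp add: obl_def)
qed

lemma sim:
  assumes "0 < n" "\<sigma> \<in> perms n"
  shows "\<exists>\<sigma>'\<in>perms n. PiA (obl A) \<sigma> = PiA A \<sigma>' \<and> last \<sigma>' = last \<sigma>"
proof -
  have ne: "\<sigma> \<noteq> []" using assms unfolding perms_def by auto
  have dec: "\<sigma> = butlast \<sigma> @ [last \<sigma>]" using ne by simp
  have d: "distinct \<sigma>" "set \<sigma> = {0..<n}" using assms unfolding perms_def by auto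
  then have db: "distinct (butlast \<sigma>)" "last \<sigma> \<notin> set (butlast \<sigma>)"
    using dec by (metis distinct_append, metis distinct_append[of "butlast \<sigma>" "[last \<sigma>]"] disjoint_iff list.set_intros(1))
  let ?t = "tr A (rev (butlast \<sigma>))"
  from inv[OF db(1), of A] have I: "distinct ?t" "set ?t = set (butlast \<sigma>)"
    "partial (obl A) (butlast \<sigma>) = partial A ?t" by auto
  have "?t @ [last \<sigma>] \<in> perms n"
    unfolding perms_def using I db d dec by (metis (mono_tags, lifting) distinct_append mem_Collect_eq set_append)
  moreover have "PiA (obl A) \<sigma> = PiA A (?t @ [last \<sigma>])"
    unfolding PiA_def using I by simp
  ultimately show ?thesis by (intro bexI[where x="?t @ [last \<sigma>]"]) auto
qed

lemma finite_perms: "finite (perms n)"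
proof -
  have "perms n \<subseteq> {xs. set xs \<subseteq> {0..<n} \<and> length xs \<le> n}"
    unfolding perms_def using distinct_card by fastforce
  moreover have "finite {xs. set xs \<subseteq> {0..<n} \<and> length xs \<le> n}"
    by (rule finite_lists_length_le) simp
  ultimately show ?thesis by (rule finite_subset)
qed

theorem proposition2:
  fixes n :: nat and A :: alice and B :: bob
  assumes "0 < n"
    and "valid_protocol n A B"
  shows "\<exists>A' B'. valid_protocol n A' B' \<and> order_oblivious n A'
           \<and> edges n A' \<subseteq> edges n A \<and> cost n A' B' \<le> cost n A B"
proof (intro exI[where x="obl A"] exI[where x=B] conjI)
  have C: "\<exists>\<sigma>'\<in>perms n. completed (obl A) \<sigma> b = completed A \<sigma>' b \<and> last \<sigma>' = last \<sigma>"
    if "\<sigma> \<in> perms n" for \<sigma> b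
    using sim[OF assms(1) that, of A] unfolding completed_def by metis
  show "valid_protocol n (obl A) B"
    unfolding valid_protocol_def
  proof (intro ballI allI)
    fix \<sigma> b assume "\<sigma> \<in> perms n"
    then obtain \<sigma>' where "\<sigma>' \<in> perms n" "completed (obl A) \<sigma> b = completed A \<sigma>' b" "last \<sigma>' = last \<sigma>"
      using C by blast
    then show "B (completed (obl A) \<sigma> b) \<subseteq> {0..<n} \<and> last \<sigma> \<in> B (completed (obl A) \<sigma> b)"
      using assms(2) unfolding valid_protocol_def by metis
  qed
  show "order_oblivious n (obl A)" by (rule oblivious)
  show "edges n (obl A) \<subseteq> edges n A"
    unfolding edges_def using sim[OF assms(1)] by blast
  let ?M = "{card (B (completed (obl A) \<sigma> b)) | \<sigma> b. \<sigma> \<in> perms n}"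
  let ?N = "{card (B (completed A \<sigma> b)) | \<sigma> b. \<sigma> \<in> perms n}"
  have sub: "?M \<subseteq> ?N"
  proof
    fix k assume "k \<in> ?M"
    then obtain \<sigma> b where "\<sigma> \<in> perms n" "k = card (B (completed (obl A) \<sigma> b))" by blast
    moreover from C[OF this(1), of b] obtain \<sigma>' where "\<sigma>' \<in> perms n"
      "completed (obl A) \<sigma> b = completed A \<sigma>' b" by blast
    ultimately show "k \<in> ?N" by auto
  qed
  have "[0..<n] \<in> perms n" unfolding perms_def by simp
  then have ne: "?M \<noteq> {}" by blast
  have "?N = (\<lambda>(\<sigma>, b). card (B (completed A \<sigma> b))) ` (perms n \<times> UNIV)" by auto
  then have fin: "finite ?N" using finite_perms by simp
  show "cost n (obl A) B \<le> cost n A B"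
    unfolding cost_def by (rule Max_mono[OF sub ne fin])
qed

end
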